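(* If $G$ is a pseudo-cograph, then every connected induced subgraph $H$ of $G$ has diameter at most $4$. Consequently, a pseudo-cograph contains no induced path $P_n$ with $n\ge6$.
   Context: Graphs finite, simple, undirected; $G-v$ is $G$ with $v$ deleted; the join of vertex-disjoint graphs adds all edges between them to the disjoint union; a cograph is a graph without induced $P_4$; the diameter is the maximum distance between two vertices. $G$ is a pseudo-cograph if $|V(G)|\le2$ or there are induced subgraphs $G_1,G_2$ of $G$ and $v\in V(G)$ with (F1) $V(G)=V(G_1)\cup V(G_2)$, $V(G_1)\cap V(G_2)=\{v\}$, $|V(G_1)|,|V(G_2)|>1$; (F2) $G_1,G_2$ are cographs; (F3) $G-v$ is the join or the disjoint union of $G_1-v$ and $G_2-v$. *)

theory Defs
  imports Main
begin

definition simple_graph :: "'a set \<Rightarrow> ('a \<Rightarrow> 'a \<Rightarrow> bool) \<Rightarrow> bool" where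
  "simple_graph V E \<longleftrightarrow> finite V \<and> (\<forall>x y. E x y \<longrightarrow> x \<in> V \<and> y \<in> V)
     \<and> (\<forall>x y. E x y \<longrightarrow> E y x) \<and> (\<forall>x. \<not> E x x)"

definition induced :: "('a \<Rightarrow> 'a \<Rightarrow> bool) \<Rightarrow> 'a set \<Rightarrow> 'a \<Rightarrow> 'a \<Rightarrow> bool" where
  "induced E S = (\<lambda>x y. E x y \<and> x \<in> S \<and> y \<in> S)"

definition cograph :: "'a set \<Rightarrow> ('a \<Rightarrow> 'a \<Rightarrow> bool) \<Rightarrow> bool" where
  "cograph V E \<longleftrightarrow> \<not> (\<exists>a\<in>V. \<exists>b\<in>V. \<exists>c\<in>V. \<exists>d\<in>V. distinct [a,b,c,d] \<and>
      E a b \<and> E b c \<and> E c d \<and> \<not> E a c \<and> \<not> E b d \<and> \<not> E a d)"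

definition graph_union_edges ::
  "('a \<Rightarrow> 'a \<Rightarrow> bool) \<Rightarrow> ('a \<Rightarrow> 'a \<Rightarrow> bool) \<Rightarrow> 'a \<Rightarrow> 'a \<Rightarrow> bool" where
  "graph_union_edges E1 E2 = (\<lambda>x y. E1 x y \<or> E2 x y)"

definition graph_join_edges ::
  "'a set \<Rightarrow> ('a \<Rightarrow> 'a \<Rightarrow> bool) \<Rightarrow> 'a set \<Rightarrow> ('a \<Rightarrow> 'a \<Rightarrow> bool) \<Rightarrow> 'a \<Rightarrow> 'a \<Rightarrow> bool" where
  "graph_join_edges V1 E1 V2 E2 = (\<lambda>x y. E1 x y \<or> E2 x y \<or>
      (x \<in> V1 \<and> y \<in> V2) \<or> (x \<in> V2 \<and> y \<in> V1))"

definition pseudo_cograph :: "'a set \<Rightarrow> ('a \<Rightarrow> 'a \<Rightarrow> bool) \<Rightarrow> bool" where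
  "pseudo_cograph V E \<longleftrightarrow> card V \<le> 2 \<or>
    (\<exists>V1 V2 v. V1 \<subseteq> V \<and> V2 \<subseteq> V \<and> v \<in> V \<and>
       V = V1 \<union> V2 \<and> V1 \<inter> V2 = {v} \<and> card V1 > 1 \<and> card V2 > 1 \<and>
       cograph V1 (induced E V1) \<and> cograph V2 (induced E V2) \<and>
       (induced E (V - {v}) =
           graph_join_edges (V1 - {v}) (induced E (V1 - {v})) (V2 - {v}) (induced E (V2 - {v}))
        \<or> induced E (V - {v}) =
           graph_union_edges (induced E (V1 - {v})) (induced E (V2 - {v}))))"

text \<open>Walks given as vertex lists; a walk with list xs has length (length xs - 1).\<close>
definition is_walk :: "'a set \<Rightarrow> ('a \<Rightarrow> 'a \<Rightarrow> bool) \<Rightarrow> 'a list \<Rightarrow> 'a \<Rightarrow> 'a \<Rightarrow> bool" where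
  "is_walk V E xs x y \<longleftrightarrow> xs \<noteq> [] \<and> hd xs = x \<and> last xs = y \<and> set xs \<subseteq> V \<and>
     (\<forall>i. Suc i < length xs \<longrightarrow> E (xs ! i) (xs ! Suc i))"

definition connected_graph :: "'a set \<Rightarrow> ('a \<Rightarrow> 'a \<Rightarrow> bool) \<Rightarrow> bool" where
  "connected_graph V E \<longleftrightarrow> V \<noteq> {} \<and> (\<forall>x\<in>V. \<forall>y\<in>V. \<exists>xs. is_walk V E xs x y)"

definition graph_dist :: "'a set \<Rightarrow> ('a \<Rightarrow> 'a \<Rightarrow> bool) \<Rightarrow> 'a \<Rightarrow> 'a \<Rightarrow> nat" where
  "graph_dist V E x y = (LEAST n. \<exists>xs. is_walk V E xs x y \<and> length xs = Suc n)"

definition diameter :: "'a set \<Rightarrow> ('a \<Rightarrow> 'a \<Rightarrow> bool) \<Rightarrow> nat" where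
  "diameter V E = Max {graph_dist V E x y | x y. x \<in> V \<and> y \<in> V}"

definition has_induced_path :: "'a set \<Rightarrow> ('a \<Rightarrow> 'a \<Rightarrow> bool) \<Rightarrow> nat \<Rightarrow> bool" where
  "has_induced_path V E n \<longleftrightarrow> (\<exists>p :: nat \<Rightarrow> 'a. inj_on p {..<n} \<and> p ` {..<n} \<subseteq> V \<and>
     (\<forall>i<n. \<forall>j<n. E (p i) (p j) \<longleftrightarrow> (j = Suc i \<or> i = Suc j)))"

end

theory Submission imports Defs begin
lemma combU:
  fixes a b w :: "nat \<Rightarrow> bool"
  assumes "a 0 \<or> b 0 \<or> w 0"
  and "\<not>(a 0 \<and> b 0)"
  and "\<not>(a 0 \<and> w 0)"
  and "\<not>(b 0 \<and> w 0)"
  and "a 1 \<or> b 1 \<or> w 1"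
  and "\<not>(a 1 \<and> b 1)"
  and "\<not>(a 1 \<and> w 1)"
  and "\<not>(b 1 \<and> w 1)"
  and "a 2 \<or> b 2 \<or> w 2"
  and "\<not>(a 2 \<and> b 2)"
  and "\<not>(a 2 \<and> w 2)"
  and "\<not>(b 2 \<and> w 2)"
  and "a 3 \<or> b 3 \<or> w 3"
  and "\<not>(a 3 \<and> b 3)"
  and "\<not>(a 3 \<and> w 3)"
  and "\<not>(b 3 \<and> w 3)"
  and "a 4 \<or> b 4 \<or> w 4"
  and "\<not>(a 4 \<and> b 4)"
  and "\<not>(a 4 \<and> w 4)"
  and "\<not>(b 4 \<and> w 4)"
  and "a 5 \<or> b 5 \<or> w 5"
  and "\<not>(a 5 \<and> b 5)"
  and "\<not>(a 5 \<and> w 5)"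
  and "\<not>(b 5 \<and> w 5)"
  and "\<not>(w 0 \<and> w 1)"
  and "\<not>(w 0 \<and> w 2)"
  and "\<not>(w 0 \<and> w 3)"
  and "\<not>(w 0 \<and> w 4)"
  and "\<not>(w 0 \<and> w 5)"
  and "\<not>(w 1 \<and> w 2)"
  and "\<not>(w 1 \<and> w 3)"
  and "\<not>(w 1 \<and> w 4)"
  and "\<not>(w 1 \<and> w 5)"
  and "\<not>(w 2 \<and> w 3)"
  and "\<not>(w 2 \<and> w 4)"
  and "\<not>(w 2 \<and> w 5)"
  and "\<not>(w 3 \<and> w 4)"
  and "\<not>(w 3 \<and> w 5)"
  and "\<not>(w 4 \<and> w 5)"
  and "\<not>((a 0 \<or> w 0) \<and> (a 1 \<or> w 1) \<and> (a 2 \<or> w 2) \<and> (a 3 \<or> w 3))"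
  and "\<not>((a 1 \<or> w 1) \<and> (a 2 \<or> w 2) \<and> (a 3 \<or> w 3) \<and> (a 4 \<or> w 4))"
  and "\<not>((a 2 \<or> w 2) \<and> (a 3 \<or> w 3) \<and> (a 4 \<or> w 4) \<and> (a 5 \<or> w 5))"
  and "\<not>((b 0 \<or> w 0) \<and> (b 1 \<or> w 1) \<and> (b 2 \<or> w 2) \<and> (b 3 \<or> w 3))"
  and "\<not>((b 1 \<or> w 1) \<and> (b 2 \<or> w 2) \<and> (b 3 \<or> w 3) \<and> (b 4 \<or> w 4))"
  and "\<not>((b 2 \<or> w 2) \<and> (b 3 \<or> w 3) \<and> (b 4 \<or> w 4) \<and> (b 5 \<or> w 5))"
  and "\<not>(a 0 \<and> b 1)"
  and "\<not>(a 1 \<and> b 2)"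
  and "\<not>(a 2 \<and> b 3)"
  and "\<not>(a 3 \<and> b 4)"
  and "\<not>(a 4 \<and> b 5)"
  and "\<not>(b 0 \<and> a 1)"
  and "\<not>(b 1 \<and> a 2)"
  and "\<not>(b 2 \<and> a 3)"
  and "\<not>(b 3 \<and> a 4)"
  and "\<not>(b 4 \<and> a 5)"
  shows False
  using assms by sat

lemma combJ:
  fixes a b w :: "nat \<Rightarrow> bool"
  assumes "a 0 \<or> b 0 \<or> w 0"
  and "\<not>(a 0 \<and> b 0)"
  and "\<not>(a 0 \<and> w 0)"
  and "\<not>(b 0 \<and> w 0)"
  and "a 1 \<or> b 1 \<or> w 1"
  and "\<not>(a 1 \<and> b 1)"
  and "\<not>(a 1 \<and> w 1)"
  and "\<not>(b 1 \<and> w 1)"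
  and "a 2 \<or> b 2 \<or> w 2"
  and "\<not>(a 2 \<and> b 2)"
  and "\<not>(a 2 \<and> w 2)"
  and "\<not>(b 2 \<and> w 2)"
  and "a 3 \<or> b 3 \<or> w 3"
  and "\<not>(a 3 \<and> b 3)"
  and "\<not>(a 3 \<and> w 3)"
  and "\<not>(b 3 \<and> w 3)"
  and "a 4 \<or> b 4 \<or> w 4"
  and "\<not>(a 4 \<and> b 4)"
  and "\<not>(a 4 \<and> w 4)"
  and "\<not>(b 4 \<and> w 4)"
  and "a 5 \<or> b 5 \<or> w 5"
  and "\<not>(a 5 \<and> b 5)"
  and "\<not>(a 5 \<and> w 5)"
  and "\<not>(b 5 \<and> w 5)"
  and "\<not>(w 0 \<and> w 1)"
  and "\<not>(w 0 \<and> w 2)"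
  and "\<not>(w 0 \<and> w 3)"
  and "\<not>(w 0 \<and> w 4)"
  and "\<not>(w 0 \<and> w 5)"
  and "\<not>(w 1 \<and> w 2)"
  and "\<not>(w 1 \<and> w 3)"
  and "\<not>(w 1 \<and> w 4)"
  and "\<not>(w 1 \<and> w 5)"
  and "\<not>(w 2 \<and> w 3)"
  and "\<not>(w 2 \<and> w 4)"
  and "\<not>(w 2 \<and> w 5)"
  and "\<not>(w 3 \<and> w 4)"
  and "\<not>(w 3 \<and> w 5)"
  and "\<not>(w 4 \<and> w 5)"
  and "\<not>((a 0 \<or> w 0) \<and> (a 1 \<or> w 1) \<and> (a 2 \<or> w 2) \<and> (a 3 \<or> w 3))"
  and "\<not>((a 1 \<or> w 1) \<and> (a 2 \<or> w 2) \<and> (a 3 \<or> w 3) \<and> (a 4 \<or> w 4))"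
  and "\<not>((a 2 \<or> w 2) \<and> (a 3 \<or> w 3) \<and> (a 4 \<or> w 4) \<and> (a 5 \<or> w 5))"
  and "\<not>((b 0 \<or> w 0) \<and> (b 1 \<or> w 1) \<and> (b 2 \<or> w 2) \<and> (b 3 \<or> w 3))"
  and "\<not>((b 1 \<or> w 1) \<and> (b 2 \<or> w 2) \<and> (b 3 \<or> w 3) \<and> (b 4 \<or> w 4))"
  and "\<not>((b 2 \<or> w 2) \<and> (b 3 \<or> w 3) \<and> (b 4 \<or> w 4) \<and> (b 5 \<or> w 5))"
  and "\<not>(a 0 \<and> b 2)"
  and "\<not>(a 0 \<and> b 3)"
  and "\<not>(a 0 \<and> b 4)"
  and "\<not>(a 0 \<and> b 5)"
  and "\<not>(a 1 \<and> b 3)"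
  and "\<not>(a 1 \<and> b 4)"
  and "\<not>(a 1 \<and> b 5)"
  and "\<not>(a 2 \<and> b 0)"
  and "\<not>(a 2 \<and> b 4)"
  and "\<not>(a 2 \<and> b 5)"
  and "\<not>(a 3 \<and> b 0)"
  and "\<not>(a 3 \<and> b 1)"
  and "\<not>(a 3 \<and> b 5)"
  and "\<not>(a 4 \<and> b 0)"
  and "\<not>(a 4 \<and> b 1)"
  and "\<not>(a 4 \<and> b 2)"
  and "\<not>(a 5 \<and> b 0)"
  and "\<not>(a 5 \<and> b 1)"
  and "\<not>(a 5 \<and> b 2)"
  and "\<not>(a 5 \<and> b 3)"
  shows False
  using assms by sat

lemma walk_splice:
  assumes W: "is_walk S F xs x y" and aj: "a \<le> j" and jl: "j < length xs"
    and h0: "a = 0 \<Longrightarrow> xs!j = x" and h1: "0 < a \<Longrightarrow> F (xs!(a-1)) (xs!j)"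
  shows "is_walk S F (take a xs @ drop j xs) x y"
proof -
  let ?ys = "take a xs @ drop j xs"
  from W have ne: "xs \<noteq> []" and hd: "hd xs = x" and la: "last xs = y" and st: "set xs \<subseteq> S"
    and ed: "\<And>i. Suc i < length xs \<Longrightarrow> F (xs!i) (xs!Suc i)"
    unfolding is_walk_def by auto
  have dne: "drop j xs \<noteq> []" using jl by simp
  have "hd ?ys = x"
  proof (cases "a = 0")
    case True then show ?thesis using h0 jl by (simp add: hd_drop_conv_nth)
  next
    case False then have "take a xs \<noteq> []" using ne by simp
    then show ?thesis using hd ne False by (simp add: hd_append)
  qed
  moreover have "last ?ys = y" using dne la jl by (simp add: last_append)
  moreover have "set ?ys \<subseteq> S" using st set_take_subset set_drop_subset by fastforce
  moreover have "F (?ys!i) (?ys!Suc i)" if si: "Suc i < length ?ys" for i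
  proof -
    have len: "length ?ys = a + (length xs - j)" using aj jl by simp
    consider "Suc i < a" | "Suc i = a" | "a \<le> i" by linarith
    then show ?thesis
    proof cases
      case 1 then show ?thesis using aj jl ed[of i] by (simp add: nth_append)
    next
      case 2 then have "i = a - 1" "0 < a" by auto
      then show ?thesis using 2 aj jl h1 by (simp add: nth_append)
    next
      case 3
      have "?ys!i = xs!(j + (i - a))" using 3 aj jl by (simp add: nth_append)
      moreover have "?ys!Suc i = xs!Suc (j + (i - a))" using 3 aj jl
        by (simp add: nth_append Suc_diff_le)
      moreover have "Suc (j + (i - a)) < length xs" using si len 3 by linarith
      ultimately show ?thesis using ed by simp
    qed
  qed
  ultimately show ?thesis unfolding is_walk_def using dne by auto
qed

lemma short_walk:
  assumes W: "is_walk S F xs x y" and mn: "\<And>ys. is_walk S F ys x y \<Longrightarrow> length xs \<le> length ys"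
    and ij: "i < j" and jl: "j < length xs"
  shows "xs!i \<noteq> xs!j" and "F (xs!i) (xs!j) \<Longrightarrow> j = Suc i"
proof -
  from W have ne: "xs \<noteq> []" and hd: "hd xs = x"
    and ed: "\<And>i. Suc i < length xs \<Longrightarrow> F (xs!i) (xs!Suc i)"
    unfolding is_walk_def by auto
  show "xs!i \<noteq> xs!j"
  proof
    assume eq: "xs!i = xs!j"
    have "is_walk S F (take i xs @ drop j xs) x y"
    proof (rule walk_splice[OF W])
      show "i \<le> j" using ij by simp
      show "j < length xs" by fact
      show "i = 0 \<Longrightarrow> xs!j = x" using eq hd ne by (simp add: hd_conv_nth)
      show "0 < i \<Longrightarrow> F (xs!(i-1)) (xs!j)" using eq ed[of "i-1"] ij jl by simp
    qed
    from mn[OF this] ij jl show False by simp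
  qed
  show "j = Suc i" if f: "F (xs!i) (xs!j)"
  proof (rule ccontr)
    assume "j \<noteq> Suc i"
    then have ij2: "Suc i < j" using ij by simp
    have "is_walk S F (take (Suc i) xs @ drop j xs) x y"
      by (rule walk_splice[OF W]) (use ij2 jl f in auto)
    from mn[OF this] ij2 jl show False by simp
  qed
qed

lemma diam_bound:
  assumes sg: "simple_graph V E" and np: "\<not> has_induced_path V E 6"
    and SV: "S \<subseteq> V" and cn: "connected_graph S (induced E S)"
  shows "diameter S (induced E S) \<le> 4"
proof -
  let ?F = "induced E S"
  have fin: "finite S" using sg SV finite_subset unfolding simple_graph_def by blast
  have Sne: "S \<noteq> {}" using cn unfolding connected_graph_def by simp
  have dl: "graph_dist S ?F x y \<le> 4" if xS: "x \<in> S" and yS: "y \<in> S" for x y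
  proof (rule ccontr)
    assume "\<not> ?thesis"
    hence d5: "graph_dist S ?F x y \<ge> 5" by simp
    obtain zs where "is_walk S ?F zs x y" using cn xS yS unfolding connected_graph_def by blast
    moreover have "zs \<noteq> []" using calculation unfolding is_walk_def by simp
    hence "length zs = Suc (length zs - 1)" by simp
    ultimately have ex: "\<exists>n xs. is_walk S ?F xs x y \<and> length xs = Suc n" by blast
    define d where "d = graph_dist S ?F x y"
    have "\<exists>xs. is_walk S ?F xs x y \<and> length xs = Suc d"
      unfolding d_def graph_dist_def using ex by (rule LeastI_ex)
    then obtain xs where W: "is_walk S ?F xs x y" and lx: "length xs = Suc d" by blast
    have mn: "length xs \<le> length ys" if "is_walk S ?F ys x y" for ys
    proof -
      have "ys \<noteq> []" using that unfolding is_walk_def by simp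
      then have "length ys = Suc (length ys - 1)" by simp
      have "d \<le> length ys - 1" unfolding d_def graph_dist_def
        by (rule Least_le) (use that \<open>length ys = Suc (length ys - 1)\<close> in blast)
      then show ?thesis using lx \<open>ys \<noteq> []\<close> by (cases ys) auto
    qed
    have d5': "d \<ge> 5" using d5 d_def by simp
    have stS: "set xs \<subseteq> S" using W unfolding is_walk_def by simp
    have ed: "\<And>i. Suc i < length xs \<Longrightarrow> ?F (xs!i) (xs!Suc i)" using W unfolding is_walk_def by simp
    have sym: "\<And>u w. E u w \<Longrightarrow> E w u" and irr: "\<And>u. \<not> E u u"
      using sg unfolding simple_graph_def by auto
    have inS: "xs!i \<in> S" if "i < 6" for i
    proof -
      have "i < length xs" using lx d5' that by simp
      then show ?thesis using stS nth_mem by blast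
    qed
    have "has_induced_path V E 6"
      unfolding has_induced_path_def
    proof (intro exI conjI)
      show "inj_on (\<lambda>i. xs!i) {..<6}"
      proof (rule inj_onI)
        fix i j assume i: "i \<in> {..<(6::nat)}" and j: "j \<in> {..<(6::nat)}" and eq: "xs!i = xs!j"
        show "i = j"
        proof (rule ccontr)
          assume "i \<noteq> j"
          then consider "i < j" | "j < i" by linarith
          then show False
          proof cases
            case 1 then show False using short_walk(1)[OF W mn 1] eq j lx d5' by auto
          next
            case 2 then show False using short_walk(1)[OF W mn 2] eq i lx d5' by auto
          qed
        qed
      qed
      show "(\<lambda>i. xs!i) ` {..<6} \<subseteq> V" using inS SV by auto
      show "\<forall>i<6. \<forall>j<6. E (xs!i) (xs!j) = (j = Suc i \<or> i = Suc j)"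
      proof (intro allI impI)
        fix i j :: nat assume i: "i < 6" and j: "j < 6"
        have Fi: "?F (xs!i) (xs!j) = E (xs!i) (xs!j)" using inS i j unfolding induced_def by simp
        show "E (xs!i) (xs!j) = (j = Suc i \<or> i = Suc j)"
        proof
          assume e: "E (xs!i) (xs!j)"
          consider "i < j" | "j < i" | "i = j" by linarith
          then show "j = Suc i \<or> i = Suc j"
          proof cases
            case 1 then show ?thesis using short_walk(2)[OF W mn 1] e Fi j lx d5' by auto
          next
            case 2
            have "?F (xs!j) (xs!i)" using e sym Fi inS i j unfolding induced_def by auto
            then show ?thesis using short_walk(2)[OF W mn 2] i lx d5' by auto
          next
            case 3 then show ?thesis using e irr by simp
          qed
        next
          assume "j = Suc i \<or> i = Suc j"
          then show "E (xs!i) (xs!j)"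
          proof
            assume "j = Suc i" then show ?thesis using ed[of i] j lx d5' unfolding induced_def by simp
          next
            assume "i = Suc j" then show ?thesis using ed[of j] i lx d5' sym unfolding induced_def by auto
          qed
        qed
      qed
    qed
    with np show False by simp
  qed
  have finA: "finite {graph_dist S ?F x y | x y. x \<in> S \<and> y \<in> S}"
    using finite_image_set2[of "\<lambda>x. x \<in> S" "\<lambda>y. y \<in> S"] fin by simp
  have neA: "{graph_dist S ?F x y | x y. x \<in> S \<and> y \<in> S} \<noteq> {}" using Sne by blast
  show ?thesis unfolding diameter_def
    by (subst Max_le_iff[OF finA neA]) (use dl in blast)
qed

lemma path_restrict:
  assumes "has_induced_path V E n" "n \<ge> 6" shows "has_induced_path V E 6"
proof -
  obtain p where p1: "inj_on p {..<n}" and p2: "p ` {..<n} \<subseteq> V"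
    and p3: "\<forall>i<n. \<forall>j<n. E (p i) (p j) \<longleftrightarrow> (j = Suc i \<or> i = Suc j)"
    using assms(1) unfolding has_induced_path_def by blast
  have sub: "{..<6} \<subseteq> {..<n}" using assms(2) by auto
  show ?thesis unfolding has_induced_path_def
  proof (intro exI[of _ p] conjI)
    show "inj_on p {..<6}" by (rule inj_on_subset[OF p1 sub])
    show "p ` {..<6} \<subseteq> V" using p2 sub by (meson image_mono subset_trans)
    show "\<forall>i<6. \<forall>j<6. E (p i) (p j) = (j = Suc i \<or> i = Suc j)"
    proof (intro allI impI)
      fix i j :: nat assume "i < 6" "j < 6"
      then have "i < n" "j < n" using assms(2) by auto
      then show "E (p i) (p j) = (j = Suc i \<or> i = Suc j)" using p3 by blast
    qed
  qed
qed
lemma noP6: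
  assumes sg: "simple_graph V E" and pc: "pseudo_cograph V E"
  shows "\<not> has_induced_path V E 6"
proof
  assume "has_induced_path V E 6"
  then obtain p where inj: "inj_on p {..<6}" and sub: "p ` {..<6} \<subseteq> V"
    and adj: "\<forall>i<6. \<forall>j<6. E (p i) (p j) \<longleftrightarrow> (j = Suc i \<or> i = Suc j)"
    unfolding has_induced_path_def by blast
  have finV: "finite V" using sg unfolding simple_graph_def by simp
  have injE: "i = j" if "p i = p j" "i < 6" "j < 6" for i j
    using inj that unfolding inj_on_def by auto
  have P4: False if cg: "cograph W (induced E W)" and k: "k \<le> 2"
      and w: "p k \<in> W" "p (k+1) \<in> W" "p (k+2) \<in> W" "p (k+3) \<in> W" for W k
  proof -
    have "distinct [p k, p (k+1), p (k+2), p (k+3)]"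
      using k injE by (auto dest: injE)
    moreover have "E (p k) (p (k+1))" "E (p (k+1)) (p (k+2))" "E (p (k+2)) (p (k+3))"
      "\<not> E (p k) (p (k+2))" "\<not> E (p (k+1)) (p (k+3))" "\<not> E (p k) (p (k+3))"
      using adj k by auto
    ultimately show False using cg w unfolding cograph_def induced_def by blast
  qed
  consider "card V \<le> 2" | V1 V2 v where "V1 \<subseteq> V" "V2 \<subseteq> V" "v \<in> V"
       "V = V1 \<union> V2" "V1 \<inter> V2 = {v}"
       "cograph V1 (induced E V1)" "cograph V2 (induced E V2)"
       "induced E (V - {v}) =
           graph_join_edges (V1 - {v}) (induced E (V1 - {v})) (V2 - {v}) (induced E (V2 - {v}))
        \<or> induced E (V - {v}) =
           graph_union_edges (induced E (V1 - {v})) (induced E (V2 - {v}))"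
    using pc unfolding pseudo_cograph_def by blast
  then show False
  proof cases
    case 1
    have "card (p ` {..<6}) = 6" using inj by (simp add: card_image)
    moreover have "card (p ` {..<6}) \<le> card V" by (rule card_mono[OF finV sub])
    ultimately show False using 1 by simp
  next
    case 2
    note V1 = 2(1) and V2 = 2(2) and vV = 2(3) and VU = 2(4) and VI = 2(5)
      and cg1 = 2(6) and cg2 = 2(7) and mode = 2(8)
    define a where "a i = (p i \<in> V1 - {v})" for i
    define b where "b i = (p i \<in> V2 - {v})" for i
    define w where "w i = (p i = v)" for i
    have v1: "v \<in> V1" and v2: "v \<in> V2" using VI by auto
    have F1: "a i \<or> b i \<or> w i" if "i < 6" for i
      using sub that VU unfolding a_def b_def w_def by auto
    have F2: "\<not>(a i \<and> b i)" "\<not>(a i \<and> w i)" "\<not>(b i \<and> w i)" for i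
      using VI unfolding a_def b_def w_def by auto
    have F3: "\<not>(w i \<and> w j)" if "i < 6" "j < 6" "i \<noteq> j" for i j
      using injE that unfolding w_def by auto
    have F4a: "\<not>((a k \<or> w k) \<and> (a (k+1) \<or> w (k+1)) \<and> (a (k+2) \<or> w (k+2)) \<and> (a (k+3) \<or> w (k+3)))"
      if "k \<le> 2" for k
      using P4[OF cg1 that] v1 unfolding a_def w_def by auto
    have F4b: "\<not>((b k \<or> w k) \<and> (b (k+1) \<or> w (k+1)) \<and> (b (k+2) \<or> w (k+2)) \<and> (b (k+3) \<or> w (k+3)))"
      if "k \<le> 2" for k
      using P4[OF cg2 that] v2 unfolding b_def w_def by auto
    have inV: "p i \<in> V" if "i < 6" for i using sub that by auto
    from mode show False
    proof
      assume J: "induced E (V - {v}) =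
           graph_join_edges (V1 - {v}) (induced E (V1 - {v})) (V2 - {v}) (induced E (V2 - {v}))"
      have FJ: "\<not>(a i \<and> b j)" if "i < 6" "j < 6" "\<not>(j = Suc i \<or> i = Suc j)" for i j
      proof
        assume ab: "a i \<and> b j"
        have "graph_join_edges (V1 - {v}) (induced E (V1 - {v})) (V2 - {v}) (induced E (V2 - {v})) (p i) (p j)"
          using ab unfolding a_def b_def graph_join_edges_def by auto
        then have "E (p i) (p j)" using J unfolding induced_def by metis
        then show False using adj that by auto
      qed
      show False
        apply (insert F4a[of 0] F4a[of 1] F4a[of 2] F4b[of 0] F4b[of 1] F4b[of 2])
        apply (rule combJ[of a b w])
        apply (simp_all add: F1 F2 F3 FJ numeral_eq_Suc)
        apply (blast+)?
        done
    next
      assume U: "induced E (V - {v}) =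
           graph_union_edges (induced E (V1 - {v})) (induced E (V2 - {v}))"
      have FU: "\<not>(a i \<and> b j)" if "i < 6" "j < 6" "j = Suc i \<or> i = Suc j" for i j
      proof
        assume ab: "a i \<and> b j"
        have "E (p i) (p j)" using adj that by auto
        then have "induced E (V - {v}) (p i) (p j)" using ab inV that unfolding a_def b_def induced_def by auto
        then have "graph_union_edges (induced E (V1 - {v})) (induced E (V2 - {v})) (p i) (p j)"
          using U by simp
        then show False using ab VI unfolding a_def b_def graph_union_edges_def induced_def by auto
      qed
      have FU': "\<not>(b i \<and> a j)" if "i < 6" "j < 6" "j = Suc i \<or> i = Suc j" for i j
        using FU[of j i] that by auto
      show False
        apply (insert F4a[of 0] F4a[of 1] F4a[of 2] F4b[of 0] F4b[of 1] F4b[of 2])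
        apply (rule combU[of a b w])
        apply (simp_all add: F1 F2 F3 FU FU' numeral_eq_Suc)
        apply (blast+)?
        done
    qed
  qed
qed

theorem mainTheorem10:
  fixes V :: "'a set" and E :: "'a \<Rightarrow> 'a \<Rightarrow> bool"
  assumes "simple_graph V E" and "pseudo_cograph V E"
  shows "(\<forall>S. S \<subseteq> V \<longrightarrow> connected_graph S (induced E S) \<longrightarrow> diameter S (induced E S) \<le> 4)
       \<and> (\<forall>n\<ge>6. \<not> has_induced_path V E n)"
  using diam_bound[OF assms(1) noP6[OF assms]] noP6[OF assms] path_restrict by blast
end
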